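(* Let $\mathcal{F}$ be a semi-metric space with semi-metric $d$, $x\in\mathcal{F}$, and let $\{X_i\}$ be an $\mathcal{F}$-valued sequence $X_i=g(\alpha_i,\alpha_{i-1},\ldots)$ with $\alpha_k$ i.i.d. and $g$ measurable; for $m\ge1$ let $X_i^{(m)}=g(\alpha_i,\ldots,\alpha_{i-m+1},\alpha'_{i-m},\ldots)$ with $\alpha'_k$ independent copies of $\alpha_0$, let $\psi$ be convex increasing on $[0,\infty)$ with $\psi(0)=0$, and $\beta_m=\|d(X_1,X_1^{(m)})\|_\psi$ with $\sum_m\beta_m<\infty$. Let $\varphi(h)=P(X_1\in B(x,h))$, $B(x,h)=\{x':d(x',x)\le h\}$, let $H=H_n$ be a deterministic bandwidth and $k=\sum_{i=1}^nI\{X_i\in B(x,H)\}$. Suppose $H'=H'_n$ and $H''=H''_n$ are sequences with $H'<H<H''$ and there are integers $1\le m=m_n\le n$ with $n\varphi(H')/(m\log n)\to\infty$, $\sum_{n}n/\psi((H''-H)/\beta_m)<\infty$ and $\sum_nn/\psi((H-H')/\beta_m)<\infty$. Then almost surely $n\varphi(H')/2\le k\le2n\varphi(H'')$ for all $n$ large enough.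
   Context: $\|Z\|_\psi=\inf\{c>0:E[\psi(|Z|/c)]\le1\}$. *)

theory Defs
  imports "HOL-Probability.Probability"
begin

text \<open>Semi-metric in the sense of functional data analysis (Ferraty--Vieu):
  a pseudo-metric, i.e. d(x,x)=0, symmetry and triangle inequality,
  but d(x,y)=0 need not imply x=y.\<close>
definition semimetric_on :: "'f set \<Rightarrow> ('f \<Rightarrow> 'f \<Rightarrow> real) \<Rightarrow> bool" where
  "semimetric_on S d \<longleftrightarrow>
     (\<forall>x\<in>S. d x x = 0) \<and>
     (\<forall>x\<in>S. \<forall>y\<in>S. d x y = d y x) \<and>
     (\<forall>x\<in>S. \<forall>y\<in>S. \<forall>z\<in>S. d x z \<le> d x y + d y z)"

definition orlicz_norm :: "'a measure \<Rightarrow> (real \<Rightarrow> real) \<Rightarrow> ('a \<Rightarrow> real) \<Rightarrow> real" where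
  "orlicz_norm M \<psi> Z =
     Inf {c::real. c > 0 \<and> (\<integral>\<^sup>+ \<omega>. ennreal (\<psi> (\<bar>Z \<omega>\<bar> / c)) \<partial>M) \<le> 1}"

definition orlicz_finite :: "'a measure \<Rightarrow> (real \<Rightarrow> real) \<Rightarrow> ('a \<Rightarrow> real) \<Rightarrow> bool" where
  "orlicz_finite M \<psi> Z \<longleftrightarrow>
     (\<exists>c::real. c > 0 \<and> (\<integral>\<^sup>+ \<omega>. ennreal (\<psi> (\<bar>Z \<omega>\<bar> / c)) \<partial>M) \<le> 1)"

end

theory Submission
  imports Defs
begin

lemma (in prob_space) mgf_bound:
  fixes \<xi> :: "'i \<Rightarrow> 'a \<Rightarrow> real" and p c :: real
  assumes fin: "finite I" and ind: "indep_vars (\<lambda>_. borel) \<xi> I"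
    and bin: "\<And>i \<omega>. i \<in> I \<Longrightarrow> \<xi> i \<omega> \<in> {0,1}"
    and ex: "\<And>i. i \<in> I \<Longrightarrow> expectation (\<xi> i) = p"
  shows "expectation (\<lambda>\<omega>. exp (c * (\<Sum>i\<in>I. \<xi> i \<omega>))) \<le> exp (card I * p * (exp c - 1))"
proof -
  have rv: "\<And>i. i \<in> I \<Longrightarrow> \<xi> i \<in> borel_measurable M"
    using ind unfolding indep_vars_def by blast
  have ind2: "indep_vars (\<lambda>_. borel) (\<lambda>i \<omega>. exp (c * \<xi> i \<omega>)) I"
    by (rule indep_vars_compose2[OF ind]) auto
  have intg: "integrable M (\<lambda>\<omega>. exp (c * \<xi> i \<omega>))" if i: "i \<in> I" for i
  proof (rule integrable_const_bound[where B="exp \<bar>c\<bar>"])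
    show "AE x in M. norm (exp (c * \<xi> i x)) \<le> exp \<bar>c\<bar>"
    proof (intro AE_I2)
      fix x show "norm (exp (c * \<xi> i x)) \<le> exp \<bar>c\<bar>"
        using bin[OF i, of x] by (auto simp: abs_if)
    qed
  qed (use rv[OF i] in auto)
  have intx: "integrable M (\<xi> i)" if i: "i \<in> I" for i
  proof (rule integrable_const_bound[where B="1"])
    show "AE x in M. norm (\<xi> i x) \<le> 1"
    proof (intro AE_I2)
      fix x show "norm (\<xi> i x) \<le> 1"
        using bin[OF i, of x] by auto
    qed
  qed (use rv[OF i] in auto)
  have "(\<lambda>\<omega>. exp (c * (\<Sum>i\<in>I. \<xi> i \<omega>))) = (\<lambda>\<omega>. \<Prod>i\<in>I. exp (c * \<xi> i \<omega>))"
    by (simp add: sum_distrib_left exp_sum fin)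
  hence "expectation (\<lambda>\<omega>. exp (c * (\<Sum>i\<in>I. \<xi> i \<omega>))) = (\<Prod>i\<in>I. expectation (\<lambda>\<omega>. exp (c * \<xi> i \<omega>)))"
    using indep_vars_lebesgue_integral[OF fin ind2 intg] by simp
  also have "\<dots> \<le> (\<Prod>i\<in>I. exp (p * (exp c - 1)))"
  proof (rule prod_mono, safe)
    fix i assume i: "i \<in> I"
    have eq: "(\<lambda>\<omega>. exp (c * \<xi> i \<omega>)) = (\<lambda>\<omega>. 1 + (exp c - 1) * \<xi> i \<omega>)"
    proof
      fix \<omega> show "exp (c * \<xi> i \<omega>) = 1 + (exp c - 1) * \<xi> i \<omega>"
        using bin[OF i, of \<omega>] by auto
    qed
    have "expectation (\<lambda>\<omega>. exp (c * \<xi> i \<omega>)) = 1 + (exp c - 1) * p"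
      unfolding eq using intx[OF i] ex[OF i] prob_space by simp
    also have "\<dots> \<le> exp (p * (exp c - 1))"
      using exp_ge_add_one_self[of "p * (exp c - 1)"] by (simp add: mult.commute)
    finally show "expectation (\<lambda>\<omega>. exp (c * \<xi> i \<omega>)) \<le> exp (p * (exp c - 1))" .
    show "0 \<le> expectation (\<lambda>\<omega>. exp (c * \<xi> i \<omega>))"
      by (rule integral_nonneg_AE) auto
  qed
  also have "\<dots> = exp (card I * p * (exp c - 1))"
    by (simp add: exp_of_nat_mult[symmetric] mult.assoc)
  finally show ?thesis .
qed

lemma exp_quarter_le: "exp (1/4::real) \<le> 1 + 1/4 + 1/16"
  using exp_bound[of "1/4::real"] by (simp add: power2_eq_square)

lemma exp_mquarter_le: "exp (-1/4::real) \<le> 25/32"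
proof -
  have "1 + 1/4 + (1/4)\<^sup>2/2 \<le> exp (1/4::real)" by (rule exp_lower_Taylor_quadratic) simp
  hence a: "32/25 \<le> exp (1/4::real)" by (simp add: power2_eq_square)
  have "exp (-1/4::real) * exp (1/4) = exp (-1/4 + 1/4)" by (rule exp_add[symmetric])
  hence e: "exp (-1/4::real) * exp (1/4) = 1" by simp
  have "exp (-1/4::real) * (32/25) \<le> exp (-1/4) * exp (1/4)"
    by (rule mult_left_mono[OF a]) simp
  thus ?thesis using e by linarith
qed

lemma (in prob_space) sum_bin_integrable:
  fixes \<xi> :: "'i \<Rightarrow> 'a \<Rightarrow> real" and c :: real
  assumes fin: "finite I" and rv: "\<And>i. i \<in> I \<Longrightarrow> \<xi> i \<in> borel_measurable M"
    and bin: "\<And>i \<omega>. i \<in> I \<Longrightarrow> \<xi> i \<omega> \<in> {0,1}"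
  shows "integrable M (\<lambda>\<omega>. exp (c * (\<Sum>i\<in>I. \<xi> i \<omega>)))"
proof (rule integrable_const_bound[where B="exp (\<bar>c\<bar> * card I)"])
  show "AE x in M. norm (exp (c * (\<Sum>i\<in>I. \<xi> i x))) \<le> exp (\<bar>c\<bar> * card I)"
  proof (intro AE_I2)
    fix x
    have "\<bar>\<Sum>i\<in>I. \<xi> i x\<bar> \<le> (\<Sum>i\<in>I. 1)"
    proof (rule order_trans[OF sum_abs sum_mono])
      fix i assume "i \<in> I" thus "\<bar>\<xi> i x\<bar> \<le> 1" using bin[of i x] by auto
    qed
    hence "\<bar>c * (\<Sum>i\<in>I. \<xi> i x)\<bar> \<le> \<bar>c\<bar> * card I"
      by (simp add: abs_mult mult_left_mono)
    thus "norm (exp (c * (\<Sum>i\<in>I. \<xi> i x))) \<le> exp (\<bar>c\<bar> * card I)"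
      by simp
  qed
qed (use rv in auto)

lemma aux_lin1: fixes K Y t :: real shows "Y \<le> 5 * K / 16 \<Longrightarrow> Y - (K + t)/4 \<le> K / 16 - t / 4"
  by (simp add: field_simps)

lemma aux_lin2: fixes K Y t :: real shows "Y \<le> - 7 * K / 32 \<Longrightarrow> Y + (K - t)/4 \<le> K / 32 - t / 4"
  by (simp add: field_simps)

lemma (in prob_space) chernoff_up:
  fixes \<xi> :: "'i \<Rightarrow> 'a \<Rightarrow> real" and p t :: real
  assumes fin: "finite I" and ind: "indep_vars (\<lambda>_. borel) \<xi> I"
    and bin: "\<And>i \<omega>. i \<in> I \<Longrightarrow> \<xi> i \<omega> \<in> {0,1}"
    and ex: "\<And>i. i \<in> I \<Longrightarrow> expectation (\<xi> i) = p" and p: "p \<ge> 0"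
  shows "prob {\<omega>\<in>space M. (\<Sum>i\<in>I. \<xi> i \<omega>) \<ge> card I * p + t} \<le> exp (card I * p / 16 - t / 4)"
proof -
  have rv: "\<And>i. i \<in> I \<Longrightarrow> \<xi> i \<in> borel_measurable M"
    using ind unfolding indep_vars_def by blast
  have int: "integrable M (\<lambda>\<omega>. exp (1/4 * (\<Sum>i\<in>I. \<xi> i \<omega>)))"
    by (rule sum_bin_integrable[OF fin rv bin])
  define a where "a = card I * p + t"
  have "{\<omega>\<in>space M. (\<Sum>i\<in>I. \<xi> i \<omega>) \<ge> a} = {\<omega>\<in>space M. exp (1/4 * (\<Sum>i\<in>I. \<xi> i \<omega>)) \<ge> exp (a/4)}"
    by auto
  also have "prob \<dots> \<le> expectation (\<lambda>\<omega>. exp (1/4 * (\<Sum>i\<in>I. \<xi> i \<omega>))) / exp (a/4)"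
    by (rule integral_Markov_inequality_measure[OF int, where A="space M"]) auto
  also have "\<dots> \<le> exp (card I * p * (exp (1/4) - 1)) / exp (a/4)"
    by (intro divide_right_mono mgf_bound[OF fin ind bin ex]) auto
  also have "\<dots> = exp (card I * p * (exp (1/4) - 1) - a/4)"
    by (simp add: exp_diff)
  also have "\<dots> \<le> exp (card I * p / 16 - t / 4)"
  proof -
    have "card I * p * (exp (1/4) - 1) \<le> card I * p * (5/16)"
      using exp_quarter_le p by (intro mult_left_mono) auto
    hence "card I * p * (exp (1/4) - 1) \<le> 5 * (card I * p) / 16" by simp
    hence "card I * p * (exp (1/4) - 1) - a/4 \<le> card I * p / 16 - t / 4"
      unfolding a_def by (rule aux_lin1)
    thus ?thesis by simp
  qed
  finally show ?thesis unfolding a_def .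
qed

lemma (in prob_space) chernoff_low:
  fixes \<xi> :: "'i \<Rightarrow> 'a \<Rightarrow> real" and p t :: real
  assumes fin: "finite I" and ind: "indep_vars (\<lambda>_. borel) \<xi> I"
    and bin: "\<And>i \<omega>. i \<in> I \<Longrightarrow> \<xi> i \<omega> \<in> {0,1}"
    and ex: "\<And>i. i \<in> I \<Longrightarrow> expectation (\<xi> i) = p" and p: "p \<ge> 0"
  shows "prob {\<omega>\<in>space M. (\<Sum>i\<in>I. \<xi> i \<omega>) \<le> card I * p - t} \<le> exp (card I * p / 32 - t / 4)"
proof -
  have rv: "\<And>i. i \<in> I \<Longrightarrow> \<xi> i \<in> borel_measurable M"
    using ind unfolding indep_vars_def by blast
  have int: "integrable M (\<lambda>\<omega>. exp (-1/4 * (\<Sum>i\<in>I. \<xi> i \<omega>)))"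
    by (rule sum_bin_integrable[OF fin rv bin])
  define a where "a = card I * p - t"
  have "{\<omega>\<in>space M. (\<Sum>i\<in>I. \<xi> i \<omega>) \<le> a} = {\<omega>\<in>space M. exp (-1/4 * (\<Sum>i\<in>I. \<xi> i \<omega>)) \<ge> exp (-a/4)}"
    by auto
  also have "prob \<dots> \<le> expectation (\<lambda>\<omega>. exp (-1/4 * (\<Sum>i\<in>I. \<xi> i \<omega>))) / exp (-a/4)"
    by (rule integral_Markov_inequality_measure[OF int, where A="space M"]) auto
  also have "\<dots> \<le> exp (card I * p * (exp (-1/4) - 1)) / exp (-a/4)"
    by (intro divide_right_mono mgf_bound[OF fin ind bin ex]) auto
  also have "\<dots> = exp (card I * p * (exp (-1/4) - 1) + a/4)"
    by (subst exp_diff[symmetric]) simp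
  also have "\<dots> \<le> exp (card I * p / 32 - t / 4)"
  proof -
    have "card I * p * (exp (-1/4) - 1) \<le> card I * p * (-7/32)"
      using exp_mquarter_le p by (intro mult_left_mono) auto
    hence "card I * p * (exp (-1/4) - 1) \<le> - 7 * (card I * p) / 32" by simp
    hence "card I * p * (exp (-1/4) - 1) + a/4 \<le> card I * p / 32 - t / 4"
      unfolding a_def by (rule aux_lin2)
    thus ?thesis by simp
  qed
  finally show ?thesis unfolding a_def .
qed

lemma law:
  fixes M :: "'w measure" and N :: "'b measure" and D :: "'b measure"
    and A :: "'s \<Rightarrow> 'w \<Rightarrow> 'b" and u :: "'i \<Rightarrow> 's" and Q :: "('i \<Rightarrow> 'b) \<Rightarrow> bool"
  assumes P: "prob_space M"
    and ind: "prob_space.indep_vars M (\<lambda>_. N) A UNIV"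
    and dist: "\<And>s. distr M N (A s) = D"
    and inj: "inj u"
    and Qm: "{w \<in> space (PiM UNIV (\<lambda>_::'i. N)). Q w} \<in> sets (PiM UNIV (\<lambda>_::'i. N))"
  shows "measure M {\<omega>\<in>space M. Q (\<lambda>j. A (u j) \<omega>)} =
         measure (PiM UNIV (\<lambda>_::'i. D)) {w \<in> space (PiM UNIV (\<lambda>_::'i. N)). Q w}"
proof -
  interpret prob_space M by fact
  have rvA: "\<And>s. A s \<in> measurable M N"
    using ind unfolding indep_vars_def by blast
  have ind1: "indep_vars (\<lambda>j. PiM {u j} (\<lambda>_. N)) (\<lambda>j \<omega>. restrict (\<lambda>i. A i \<omega>) {u j}) UNIV"
    by (rule indep_vars_restrict[OF ind]) (use inj in \<open>auto simp: disjoint_family_on_def inj_def\<close>)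
  have ind2: "indep_vars (\<lambda>_. N) (\<lambda>j \<omega>. (\<lambda>f. f (u j)) (restrict (\<lambda>i. A i \<omega>) {u j})) UNIV"
    by (rule indep_vars_compose2[OF ind1]) (auto intro: measurable_component_singleton)
  have ind3: "indep_vars (\<lambda>_. N) (\<lambda>j. A (u j)) UNIV"
    using ind2 by simp
  have "distr M (PiM UNIV (\<lambda>_. N)) (\<lambda>\<omega>. \<lambda>j\<in>UNIV. A (u j) \<omega>) = (\<Pi>\<^sub>M j\<in>UNIV. distr M N (A (u j)))"
    using indep_vars_iff_distr_eq_PiM[where I=UNIV and M'="\<lambda>_. N" and X="\<lambda>j. A (u j)"] ind3 rvA by simp
  also have "\<dots> = PiM UNIV (\<lambda>_. D)" by (simp add: dist)
  also have "(\<lambda>\<omega>. \<lambda>j\<in>UNIV. A (u j) \<omega>) = (\<lambda>\<omega> j. A (u j) \<omega>)"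
    by (simp add: restrict_def fun_eq_iff)
  finally have eq: "distr M (PiM UNIV (\<lambda>_. N)) (\<lambda>\<omega> j. A (u j) \<omega>) = PiM UNIV (\<lambda>_::'i. D)" .
  have meas: "(\<lambda>\<omega> j. A (u j) \<omega>) \<in> measurable M (PiM UNIV (\<lambda>_::'i. N))"
    by (rule measurable_PiM_single') (use rvA[THEN measurable_space] rvA in auto)
  have "measure M {\<omega>\<in>space M. Q (\<lambda>j. A (u j) \<omega>)} =
        measure (distr M (PiM UNIV (\<lambda>_. N)) (\<lambda>\<omega> j. A (u j) \<omega>)) {w \<in> space (PiM UNIV (\<lambda>_::'i. N)). Q w}"
    using meas Qm by (subst measure_distr) (auto intro!: arg_cong[where f="measure M"] simp: meas[THEN measurable_space])
  then show ?thesis using eq by simp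
qed

lemma psi_facts:
  fixes \<psi> :: "real \<Rightarrow> real"
  assumes cv: "convex_on {0..} \<psi>" and mo: "strict_mono_on {0..} \<psi>" and z: "\<psi> 0 = 0"
  shows psi_pos: "\<And>s. s > 0 \<Longrightarrow> \<psi> s > 0"
    and psi_lin: "\<And>s. s \<ge> 1 \<Longrightarrow> s * \<psi> 1 \<le> \<psi> s"
    and psi_cont: "continuous_on {0<..} \<psi>"
    and psi_le: "\<And>a b. 0 \<le> a \<Longrightarrow> a \<le> b \<Longrightarrow> \<psi> a \<le> \<psi> b"
proof -
  show pos: "\<psi> s > 0" if "s > 0" for s
    using strict_mono_onD[OF mo, of 0 s] that z by simp
  show "\<psi> a \<le> \<psi> b" if "0 \<le> a" "a \<le> b" for a b
    using strict_mono_onD[OF mo, of a b] that by (cases "a = b") auto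
  show "s * \<psi> 1 \<le> \<psi> s" if s: "s \<ge> 1" for s
  proof -
    have "\<psi> ((1 - 1/s) *\<^sub>R 0 + (1/s) *\<^sub>R s) \<le> (1 - 1/s) * \<psi> 0 + (1/s) * \<psi> s"
      using s by (intro convex_onD[OF cv]) auto
    hence "\<psi> 1 \<le> \<psi> s / s" using s z by simp
    thus ?thesis using s by (simp add: field_simps)
  qed
  show "continuous_on {0<..} \<psi>"
    by (rule convex_on_continuous) (auto intro: convex_on_subset[OF cv])
qed

lemma orlicz_tail:
  fixes \<psi> :: "real \<Rightarrow> real" and Z :: "'a \<Rightarrow> real"
  assumes P: "prob_space M" and Zm: "Z \<in> borel_measurable M"
    and fin: "orlicz_finite M \<psi> Z"
    and cv: "convex_on {0..} \<psi>" and mo: "strict_mono_on {0..} \<psi>" and z: "\<psi> 0 = 0"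
    and t: "t > 0"
  shows "measure M {\<omega>\<in>space M. \<bar>Z \<omega>\<bar> > t} \<le> 1 / \<psi> (t / orlicz_norm M \<psi> Z)"
proof -
  interpret prob_space M by fact
  note pf = psi_facts[OF cv mo z]
  define S where "S = {c::real. c > 0 \<and> (\<integral>\<^sup>+ \<omega>. ennreal (\<psi> (\<bar>Z \<omega>\<bar> / c)) \<partial>M) \<le> 1}"
  define \<beta> where "\<beta> = orlicz_norm M \<psi> Z"
  have \<beta>S: "\<beta> = Inf S" unfolding \<beta>_def S_def orlicz_norm_def ..
  have Sne: "S \<noteq> {}" using fin unfolding orlicz_finite_def S_def by auto
  have Sbdd: "bdd_below S" unfolding S_def by (rule bdd_belowI[of _ 0]) auto
  have \<beta>0: "\<beta> \<ge> 0" unfolding \<beta>S by (rule cInf_greatest[OF Sne]) (auto simp: S_def)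
  define \<psi>' where "\<psi>' = (\<lambda>s. \<psi> (max 0 s))"
  have \<psi>'m: "\<psi>' \<in> borel_measurable borel"
    by (rule borel_measurable_mono) (auto simp: mono_def \<psi>'_def intro!: pf(4))
  have mk: "(\<lambda>\<omega>. \<psi> (\<bar>Z \<omega>\<bar> / c)) \<in> borel_measurable M" if "c > 0" for c
  proof -
    have "(\<lambda>\<omega>. \<psi>' (\<bar>Z \<omega>\<bar> / c)) \<in> borel_measurable M"
      using \<psi>'m Zm by measurable
    moreover have "\<psi>' (\<bar>Z \<omega>\<bar> / c) = \<psi> (\<bar>Z \<omega>\<bar> / c)" for \<omega>
      using that by (simp add: \<psi>'_def)
    ultimately show ?thesis by simp
  qed
  have markov: "measure M {\<omega>\<in>space M. \<bar>Z \<omega>\<bar> > t} \<le> 1 / \<psi> (t / c)" if cS: "c \<in> S" for c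
  proof -
    have c: "c > 0" and int: "(\<integral>\<^sup>+ \<omega>. ennreal (\<psi> (\<bar>Z \<omega>\<bar> / c)) \<partial>M) \<le> 1"
      using cS by (auto simp: S_def)
    have pt: "\<psi> (t / c) > 0" using pf(1) t c by simp
    have sub: "{\<omega>\<in>space M. \<bar>Z \<omega>\<bar> > t} \<subseteq> {\<omega>\<in>space M. 1 \<le> ennreal (1 / \<psi> (t / c)) * ennreal (\<psi> (\<bar>Z \<omega>\<bar> / c))}"
    proof safe
      fix \<omega> assume "\<omega> \<in> space M" "\<bar>Z \<omega>\<bar> > t"
      hence "\<psi> (t / c) \<le> \<psi> (\<bar>Z \<omega>\<bar> / c)"
        using t c by (intro pf(4)) (auto simp: divide_right_mono)
      hence "1 \<le> (1 / \<psi> (t / c)) * \<psi> (\<bar>Z \<omega>\<bar> / c)" using pt by (simp add: field_simps)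
      thus "1 \<le> ennreal (1 / \<psi> (t / c)) * ennreal (\<psi> (\<bar>Z \<omega>\<bar> / c))"
        using pt by (simp add: ennreal_mult'[symmetric] ennreal_1[symmetric] del: ennreal_1)
    qed
    have "emeasure M {\<omega>\<in>space M. \<bar>Z \<omega>\<bar> > t} \<le> emeasure M {\<omega>\<in>space M. 1 \<le> ennreal (1 / \<psi> (t / c)) * ennreal (\<psi> (\<bar>Z \<omega>\<bar> / c))}"
      by (rule emeasure_mono[OF sub]) (use mk[OF c] in measurable)
    also have "\<dots> \<le> ennreal (1 / \<psi> (t / c)) * (\<integral>\<^sup>+ \<omega>. ennreal (\<psi> (\<bar>Z \<omega>\<bar> / c)) * indicator (space M) \<omega> \<partial>M)"
      by (rule nn_integral_Markov_inequality) (use mk[OF c] in auto)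
    also have "(\<integral>\<^sup>+ \<omega>. ennreal (\<psi> (\<bar>Z \<omega>\<bar> / c)) * indicator (space M) \<omega> \<partial>M) = (\<integral>\<^sup>+ \<omega>. ennreal (\<psi> (\<bar>Z \<omega>\<bar> / c)) \<partial>M)"
      by (rule nn_integral_cong) auto
    also have "ennreal (1 / \<psi> (t / c)) * \<dots> \<le> ennreal (1 / \<psi> (t / c)) * 1"
      by (rule mult_left_mono[OF int]) auto
    finally have "emeasure M {\<omega>\<in>space M. \<bar>Z \<omega>\<bar> > t} \<le> ennreal (1 / \<psi> (t / c))" by simp
    thus ?thesis using pt by (simp add: emeasure_eq_measure)
  qed
  have up: "c' \<in> S" if "c \<in> S" "c \<le> c'" for c c'
  proof -
    have c: "c > 0" using that by (auto simp: S_def)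
    have "(\<integral>\<^sup>+ \<omega>. ennreal (\<psi> (\<bar>Z \<omega>\<bar> / c')) \<partial>M) \<le> (\<integral>\<^sup>+ \<omega>. ennreal (\<psi> (\<bar>Z \<omega>\<bar> / c)) \<partial>M)"
    proof (rule nn_integral_mono)
      fix \<omega> show "ennreal (\<psi> (\<bar>Z \<omega>\<bar> / c')) \<le> ennreal (\<psi> (\<bar>Z \<omega>\<bar> / c))"
        using that c by (intro ennreal_leI pf(4)) (auto intro: divide_left_mono)
    qed
    thus ?thesis using that c by (auto simp: S_def)
  qed
  have gt: "c \<in> S" if cb: "c > \<beta>" for c
  proof -
    obtain c0 where "c0 \<in> S" "c0 < c" using cInf_less_iff[OF Sne Sbdd, of c] cb unfolding \<beta>S by blast
    thus ?thesis using up by auto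
  qed
  show ?thesis
  proof (cases "\<beta> = 0")
    case True
    have "measure M {\<omega>\<in>space M. \<bar>Z \<omega>\<bar> > t} \<le> 0"
    proof (rule ccontr)
      let ?p = "measure M {\<omega>\<in>space M. \<bar>Z \<omega>\<bar> > t}"
      assume "\<not> ?p \<le> 0"
      hence p: "?p > 0" by simp
      have p1: "\<psi> 1 > 0" using pf(1) by simp
      define s where "s = max 1 (2 / (?p * \<psi> 1))"
      have s1: "s \<ge> 1" unfolding s_def by simp
      have s2: "s \<ge> 2 / (?p * \<psi> 1)" unfolding s_def by simp
      define c where "c = t / s"
      have c: "c > 0" using t s1 by (simp add: c_def)
      have "?p \<le> 1 / \<psi> (t / c)" using markov gt c True by auto
      also have "t / c = s" using t s1 by (simp add: c_def)
      also have "1 / \<psi> s \<le> 1 / (s * \<psi> 1)"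
        using pf(2)[OF s1] p1 s1 pf(1)[of s] by (intro divide_left_mono) (auto intro!: mult_pos_pos)
      also have "\<dots> \<le> ?p / 2"
        using s2 p p1 s1 by (simp add: field_simps)
      finally show False using p by simp
    qed
    thus ?thesis using True \<beta>_def z by simp
  next
    case False
    hence b: "\<beta> > 0" using \<beta>0 by simp
    have lim: "((\<lambda>c. 1 / \<psi> (t / c)) \<longlongrightarrow> 1 / \<psi> (t / \<beta>)) (at_right \<beta>)"
    proof -
      have "((\<lambda>c. t / c) \<longlongrightarrow> t / \<beta>) (at_right \<beta>)"
        using b by (intro tendsto_intros) auto
      moreover have "isCont \<psi> (t / \<beta>)"
        using pf(3) b t by (intro continuous_on_interior[of "{0<..}"]) (auto simp: interior_open)
      ultimately have "((\<lambda>c. \<psi> (t / c)) \<longlongrightarrow> \<psi> (t / \<beta>)) (at_right \<beta>)"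
        using isCont_tendsto_compose by blast
      thus ?thesis using pf(1)[of "t / \<beta>"] b t by (intro tendsto_intros) auto
    qed
    have ev: "eventually (\<lambda>c. measure M {\<omega>\<in>space M. \<bar>Z \<omega>\<bar> > t} \<le> 1 / \<psi> (t / c)) (at_right \<beta>)"
      using markov gt by (auto simp: eventually_at_right_field intro: exI[of _ "\<beta> + 1"])
    have "measure M {\<omega>\<in>space M. \<bar>Z \<omega>\<bar> > t} \<le> 1 / \<psi> (t / \<beta>)"
      by (rule tendsto_lowerbound[OF lim ev]) simp
    thus ?thesis unfolding \<beta>_def .
  qed
qed

lemma reidx_meas:
  fixes w :: "'k \<Rightarrow> 'i"
  assumes "\<And>j. w j \<in> K"
  shows "(\<lambda>f j. f (w j)) \<in> measurable (PiM K (\<lambda>_. N)) (PiM UNIV (\<lambda>_::'k. N))"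
  by (rule measurable_PiM_single') (use assms in \<open>auto intro: measurable_component_singleton simp: space_PiM PiE_iff\<close>)

lemma law_single:
  fixes M :: "'w measure" and N :: "'b measure" and D :: "'b measure"
    and A :: "'s \<Rightarrow> 'w \<Rightarrow> 'b" and u1 u2 :: "nat \<Rightarrow> 's" and h :: "'f \<Rightarrow> real" and c :: real
  assumes P: "prob_space M"
    and ind: "prob_space.indep_vars M (\<lambda>_. N) A UNIV"
    and dist: "\<And>s. distr M N (A s) = D"
    and inj1: "inj u1" and inj2: "inj u2"
    and g: "g \<in> measurable (PiM UNIV (\<lambda>_::nat. N)) F"
    and h: "h \<in> borel_measurable F"
  shows "measure M {\<omega>\<in>space M. h (g (\<lambda>j. A (u1 j) \<omega>)) \<le> c} =
         measure M {\<omega>\<in>space M. h (g (\<lambda>j. A (u2 j) \<omega>)) \<le> c}"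
proof -
  have Qm: "{w \<in> space (PiM UNIV (\<lambda>_::nat. N)). h (g w) \<le> c} \<in> sets (PiM UNIV (\<lambda>_::nat. N))"
  proof -
    have "(\<lambda>w. h (g w)) \<in> borel_measurable (PiM UNIV (\<lambda>_::nat. N))"
      using measurable_compose[OF g h] .
    from borel_measurable_le[OF this borel_measurable_const[where c=c]] show ?thesis .
  qed
  show ?thesis
    using law[OF P ind dist inj1 Qm] law[OF P ind dist inj2 Qm] by simp
qed

lemma law_pair:
  fixes M :: "'w measure" and N :: "'b measure" and D :: "'b measure"
    and A :: "'s \<Rightarrow> 'w \<Rightarrow> 'b" and u1 u2 :: "nat + nat \<Rightarrow> 's" and v1 v2 :: "nat \<Rightarrow> nat + nat" and d :: "'f \<Rightarrow> 'f \<Rightarrow> real" and t :: real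
  assumes P: "prob_space M"
    and ind: "prob_space.indep_vars M (\<lambda>_. N) A UNIV"
    and dist: "\<And>s. distr M N (A s) = D"
    and inj1: "inj u1" and inj2: "inj u2"
    and g: "g \<in> measurable (PiM UNIV (\<lambda>_::nat. N)) F"
    and dm: "(\<lambda>p. d (fst p) (snd p)) \<in> borel_measurable (F \<Otimes>\<^sub>M F)"
  shows "measure M {\<omega>\<in>space M. t < d (g (\<lambda>j. A (u1 (v1 j)) \<omega>)) (g (\<lambda>j. A (u1 (v2 j)) \<omega>))} =
         measure M {\<omega>\<in>space M. t < d (g (\<lambda>j. A (u2 (v1 j)) \<omega>)) (g (\<lambda>j. A (u2 (v2 j)) \<omega>))}"
proof -
  let ?Pi = "PiM UNIV (\<lambda>_::nat+nat. N)"
  have m1: "(\<lambda>w. g (\<lambda>j. w (v1 j))) \<in> measurable ?Pi F"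
    by (rule measurable_compose[OF reidx_meas g]) simp
  have m2: "(\<lambda>w. g (\<lambda>j. w (v2 j))) \<in> measurable ?Pi F"
    by (rule measurable_compose[OF reidx_meas g]) simp
  have mp: "(\<lambda>w. (g (\<lambda>j. w (v1 j)), g (\<lambda>j. w (v2 j)))) \<in> measurable ?Pi (F \<Otimes>\<^sub>M F)"
    using m1 m2 by (rule measurable_Pair)
  have md: "(\<lambda>w. d (g (\<lambda>j. w (v1 j))) (g (\<lambda>j. w (v2 j)))) \<in> borel_measurable ?Pi"
    using measurable_compose[OF mp dm] by simp
  have Qm: "{w \<in> space ?Pi. t < d (g (\<lambda>j. w (v1 j))) (g (\<lambda>j. w (v2 j)))} \<in> sets ?Pi"
    using borel_measurable_less[OF borel_measurable_const[where c=t] md] .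
  show ?thesis
    using law[OF P ind dist inj1 Qm] law[OF P ind dist inj2 Qm] by simp
qed

lemma card_filter_sum:
  "finite S \<Longrightarrow> real (card {i\<in>S. P i}) = (\<Sum>i\<in>S. if P i then 1 else 0)"
  by (simp add: sum.inter_filter[symmetric])

lemma mod_class_card:
  assumes "1 \<le> mm" "mm \<le> n"
  shows "real (card {i\<in>{1..n}. i mod mm = r}) \<le> 2 * real n / real mm"
proof -
  have sub: "{i\<in>{1..n}. i mod mm = r} \<subseteq> (\<lambda>q. q * mm + r) ` {..n div mm}"
  proof
    fix i assume i: "i \<in> {i\<in>{1..n}. i mod mm = r}"
    have "i = (i div mm) * mm + r" using i div_mult_mod_eq[of i mm] by simp
    moreover have "i div mm \<le> n div mm" using i by (auto intro: div_le_mono)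
    ultimately show "i \<in> (\<lambda>q. q * mm + r) ` {..n div mm}" by blast
  qed
  have "card {i\<in>{1..n}. i mod mm = r} \<le> card ((\<lambda>q. q * mm + r) ` {..n div mm})"
    by (rule card_mono[OF _ sub]) simp
  also have "\<dots> \<le> card {..n div mm}" by (rule card_image_le) simp
  also have "\<dots> = n div mm + 1" by simp
  finally have c: "real (card {i\<in>{1..n}. i mod mm = r}) \<le> real (n div mm) + 1" by linarith
  have d1: "n div mm \<ge> 1" using assms div_greater_zero_iff[of n mm] by simp
  have d2: "real (n div mm) \<le> real n / real mm" by (rule of_nat_div_le_of_nat)
  show ?thesis using c d1 d2 by linarith
qed

lemma mod_class_sum:
  fixes f :: "nat \<Rightarrow> real"
  assumes "1 \<le> mm"
  shows "(\<Sum>r<mm. \<Sum>i\<in>{i\<in>{1..n}. i mod mm = r}. f i) = (\<Sum>i\<in>{1..n}. f i)"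
proof -
  have "(\<lambda>i. i mod mm) ` {1..n} \<subseteq> {..<mm}" using assms by auto
  from sum.group[OF _ _ this, of f] show ?thesis by simp
qed

lemma mod_class_far:
  fixes i i' mm :: nat
  assumes "i mod mm = i' mod mm" "i < i'"
  shows "mm \<le> i' - i"
proof -
  have "mm dvd i' - i" using assms mod_eq_dvd_iff_nat[of i i' mm] by simp
  moreover have "i' - i > 0" using assms by simp
  ultimately show ?thesis by (rule dvd_imp_le)
qed

theorem proposition4:
  fixes M :: "'w measure" and N :: "'b measure" and F :: "'f measure"
    and d :: "'f \<Rightarrow> 'f \<Rightarrow> real" and x :: 'f
    and g :: "(nat \<Rightarrow> 'b) \<Rightarrow> 'f"
    and \<alpha> \<alpha>' :: "int \<Rightarrow> 'w \<Rightarrow> 'b"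
    and \<psi> :: "real \<Rightarrow> real"
    and H H' H'' :: "nat \<Rightarrow> real" and m :: "nat \<Rightarrow> nat"
    and X :: "int \<Rightarrow> 'w \<Rightarrow> 'f" and Xm :: "nat \<Rightarrow> 'w \<Rightarrow> 'f"
    and \<beta> :: "nat \<Rightarrow> real" and \<phi> :: "real \<Rightarrow> real" and k :: "nat \<Rightarrow> 'w \<Rightarrow> nat"
  assumes P: "prob_space M"
    and semi: "semimetric_on (space F) d"
    and d_meas: "(\<lambda>p. d (fst p) (snd p)) \<in> borel_measurable (F \<Otimes>\<^sub>M F)"
    and x_in: "x \<in> space F"
    and g_meas: "g \<in> measurable (Pi\<^sub>M UNIV (\<lambda>_. N)) F"
    and \<alpha>_meas: "\<And>j. \<alpha> j \<in> measurable M N"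
    and \<alpha>'_meas: "\<And>j. \<alpha>' j \<in> measurable M N"
    and indep: "prob_space.indep_vars M (\<lambda>_. N)
                  (\<lambda>s. case s of Inl j \<Rightarrow> \<alpha> j | Inr j \<Rightarrow> \<alpha>' j) UNIV"
    and ident: "\<And>j. distr M N (\<alpha> j) = distr M N (\<alpha> 0)"
    and ident': "\<And>j. distr M N (\<alpha>' j) = distr M N (\<alpha> 0)"
    and X_def: "\<And>i \<omega>. X i \<omega> = g (\<lambda>j. \<alpha> (i - int j) \<omega>)"
    and Xm_def: "\<And>mm \<omega>. Xm mm \<omega> =
                   g (\<lambda>j. if j < mm then \<alpha> (1 - int j) \<omega> else \<alpha>' (1 - int j) \<omega>)"
    and \<psi>_convex: "convex_on {0..} \<psi>"
    and \<psi>_incr: "strict_mono_on {0..} \<psi>"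
    and \<psi>0: "\<psi> 0 = 0"
    and \<beta>_def: "\<And>mm. \<beta> mm = orlicz_norm M \<psi> (\<lambda>\<omega>. d (X 1 \<omega>) (Xm mm \<omega>))"
    and \<beta>_finite: "\<And>mm. mm \<ge> 1 \<Longrightarrow> orlicz_finite M \<psi> (\<lambda>\<omega>. d (X 1 \<omega>) (Xm mm \<omega>))"
    and \<beta>_summable: "summable \<beta>"
    and \<phi>_def: "\<And>h. \<phi> h = measure M {\<omega> \<in> space M. d (X 1 \<omega>) x \<le> h}"
    and k_def: "\<And>n \<omega>. k n \<omega> = card {i \<in> {1..n}. d (X (int i) \<omega>) x \<le> H n}"
    and H_order: "\<And>n. H' n < H n \<and> H n < H'' n"
    and m_range: "\<And>n. n \<ge> 1 \<Longrightarrow> 1 \<le> m n \<and> m n \<le> n"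
    and lim: "filterlim (\<lambda>n. real n * \<phi> (H' n) / (real (m n) * ln (real n))) at_top sequentially"
    and sum1: "summable (\<lambda>n. real n / \<psi> ((H'' n - H n) / \<beta> (m n)))"
    and sum2: "summable (\<lambda>n. real n / \<psi> ((H n - H' n) / \<beta> (m n)))"
  shows "AE \<omega> in M. eventually (\<lambda>n. real n * \<phi> (H' n) / 2 \<le> real (k n \<omega>) \<and>
                                     real (k n \<omega>) \<le> 2 * real n * \<phi> (H'' n)) sequentially"
proof -
  interpret prob_space M by (rule P)
  note pf = psi_facts[OF \<psi>_convex \<psi>_incr \<psi>0]
  define A :: "int + int \<Rightarrow> 'w \<Rightarrow> 'b" where "A = (\<lambda>s. case s of Inl j \<Rightarrow> \<alpha> j | Inr j \<Rightarrow> \<alpha>' j)"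
  define D where "D = distr M N (\<alpha> 0)"
  have A_meas: "A s \<in> measurable M N" for s
    by (cases s) (auto simp: A_def \<alpha>_meas \<alpha>'_meas)
  have A_dist: "distr M N (A s) = D" for s
  proof (cases s)
    case (Inl j) thus ?thesis unfolding A_def D_def using ident[of j] by simp
  next
    case (Inr j) thus ?thesis unfolding A_def D_def using ident'[of j] by simp
  qed
  have A_ind: "indep_vars (\<lambda>_. N) A UNIV"
    using indep unfolding A_def .
  define enc :: "int \<Rightarrow> nat \<Rightarrow> int" where "enc = (\<lambda>i j. int (prod_encode (nat i, j)))"
  define uX :: "int \<Rightarrow> nat + nat \<Rightarrow> int + int" where
    "uX = (\<lambda>i s. case s of Inl j \<Rightarrow> Inl (i - int j) | Inr j \<Rightarrow> Inr (enc i j))"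
  define uO :: "nat + nat \<Rightarrow> int + int" where
    "uO = (\<lambda>s. case s of Inl j \<Rightarrow> Inl (1 - int j) | Inr j \<Rightarrow> Inr (1 - int j))"
  define v2 :: "nat \<Rightarrow> nat \<Rightarrow> nat + nat" where "v2 = (\<lambda>mm j. if j < mm then Inl j else Inr j)"
  define Y :: "nat \<Rightarrow> int \<Rightarrow> 'w \<Rightarrow> 'f" where "Y = (\<lambda>n i \<omega>. g (\<lambda>j. A (uX i (v2 (m n) j)) \<omega>))"
  have X_A: "X i \<omega> = g (\<lambda>j. A (uX i (Inl j)) \<omega>)" for i \<omega>
    unfolding X_def by (rule arg_cong[where f=g]) (auto simp: fun_eq_iff A_def uX_def)
  have X1_A: "X 1 \<omega> = g (\<lambda>j. A (uO (Inl j)) \<omega>)" for \<omega>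
    unfolding X_def by (rule arg_cong[where f=g]) (auto simp: fun_eq_iff A_def uO_def)
  have Xm_A: "Xm mm \<omega> = g (\<lambda>j. A (uO (v2 mm j)) \<omega>)" for mm \<omega>
    unfolding Xm_def by (rule arg_cong[where f=g]) (auto simp: fun_eq_iff A_def uO_def v2_def)
  have Y_A: "Y n i \<omega> = g (\<lambda>j. A (uX i (v2 (m n) j)) \<omega>)" for n i \<omega>
    by (simp add: Y_def)
  have enc_eq: "enc i j = enc i' j' \<longleftrightarrow> nat i = nat i' \<and> j = j'" for i i' j j'
    by (simp add: enc_def)
  have inj_uX: "inj (uX i)" for i
    unfolding inj_def uX_def by (auto split: sum.splits simp: enc_eq)
  have inj_uO: "inj uO"
    unfolding inj_def uO_def by (auto split: sum.splits)
  have inj_v2: "inj (v2 mm)" for mm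
    unfolding inj_def v2_def by (auto split: if_splits)
  have inj_uXv: "inj (\<lambda>j. uX i (v2 mm j))" for i mm
    using inj_compose[OF inj_uX inj_v2] by (simp add: o_def)
  have inj_uOl: "inj (\<lambda>j. uO (Inl j))"
    unfolding inj_def uO_def by auto
  have gA: "(\<lambda>\<omega>. g (\<lambda>j. A (u j) \<omega>)) \<in> measurable M F" for u :: "nat \<Rightarrow> int + int"
  proof (rule measurable_compose[OF _ g_meas])
    show "(\<lambda>\<omega> j. A (u j) \<omega>) \<in> measurable M (PiM UNIV (\<lambda>_. N))"
      by (rule measurable_PiM_single') (use A_meas[THEN measurable_space] A_meas in auto)
  qed
  have X_meas: "X i \<in> measurable M F" for i
  proof -
    have "X i = (\<lambda>\<omega>. g (\<lambda>j. A (uX i (Inl j)) \<omega>))" using X_A by auto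
    thus ?thesis using gA by simp
  qed
  have Xm_meas: "Xm mm \<in> measurable M F" for mm
  proof -
    have "Xm mm = (\<lambda>\<omega>. g (\<lambda>j. A (uO (v2 mm j)) \<omega>))" using Xm_A by auto
    thus ?thesis using gA by simp
  qed
  have Y_meas: "Y n i \<in> measurable M F" for n i
    unfolding Y_def using gA by simp
  have pair_x: "(\<lambda>y. (y, x)) \<in> measurable F (F \<Otimes>\<^sub>M F)"
    by (rule measurable_Pair[OF measurable_ident_sets[OF refl] measurable_const[OF x_in]])
  have dx_meas: "(\<lambda>y. d y x) \<in> borel_measurable F"
    using measurable_compose[OF pair_x d_meas] by simp
  have dXY_meas: "(\<lambda>\<omega>. d (U \<omega>) (V \<omega>)) \<in> borel_measurable M"
    if "U \<in> measurable M F" "V \<in> measurable M F" for U V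
    using measurable_compose[OF measurable_Pair[OF that] d_meas] by simp
  have sym: "d a b = d b a" if "a \<in> space F" "b \<in> space F" for a b
    using semi that unfolding semimetric_on_def by blast
  have tri: "d a c \<le> d a b + d b c" if "a \<in> space F" "b \<in> space F" "c \<in> space F" for a b c
    using semi that unfolding semimetric_on_def by blast

  have law2: "measure M {\<omega>\<in>space M. t < d (X i \<omega>) (Y n i \<omega>)} =
              measure M {\<omega>\<in>space M. t < d (X 1 \<omega>) (Xm (m n) \<omega>)}" for t n i
  proof -
    have eq: "measure M {\<omega>\<in>space M. t < d (g (\<lambda>j. A (uX i (Inl j)) \<omega>)) (g (\<lambda>j. A (uX i (v2 (m n) j)) \<omega>))} =
              measure M {\<omega>\<in>space M. t < d (g (\<lambda>j. A (uO (Inl j)) \<omega>)) (g (\<lambda>j. A (uO (v2 (m n) j)) \<omega>))}"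
      by (rule law_pair[OF P A_ind A_dist inj_uX inj_uO g_meas d_meas])
    show ?thesis using eq by (simp only: X_A[symmetric] Y_A[symmetric] X1_A[symmetric] Xm_A[symmetric])
  qed
  have law1: "measure M {\<omega>\<in>space M. d (Y n i \<omega>) x \<le> h} = \<phi> h" for n i h
  proof -
    have eq: "measure M {\<omega>\<in>space M. d (g (\<lambda>j. A (uX i (v2 (m n) j)) \<omega>)) x \<le> h} =
              measure M {\<omega>\<in>space M. d (g (\<lambda>j. A (uO (Inl j)) \<omega>)) x \<le> h}"
      by (rule law_single[OF P A_ind A_dist inj_uXv inj_uOl g_meas dx_meas])
    show ?thesis using eq by (simp only: \<phi>_def X1_A[symmetric] Y_A[symmetric])
  qed
  have \<phi>_nonneg: "\<phi> h \<ge> 0" for h by (simp add: \<phi>_def)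
  have \<phi>_mono: "\<phi> h \<le> \<phi> h'" if "h \<le> h'" for h h'
    unfolding \<phi>_def using that
    by (intro finite_measure_mono) (auto intro!: borel_measurable_le dXY_meas X_meas measurable_const[OF x_in])

  have tail: "measure M {\<omega>\<in>space M. a < d (X i \<omega>) (Y n i \<omega>)} \<le> 1 / \<psi> (a / \<beta> (m n))"
    if n: "n \<ge> 1" and a: "a > 0" for n i a
  proof -
    have Zm: "(\<lambda>\<omega>. d (X 1 \<omega>) (Xm (m n) \<omega>)) \<in> borel_measurable M"
      by (rule dXY_meas[OF X_meas Xm_meas])
    have "measure M {\<omega>\<in>space M. a < d (X 1 \<omega>) (Xm (m n) \<omega>)} \<le>
          measure M {\<omega>\<in>space M. a < \<bar>d (X 1 \<omega>) (Xm (m n) \<omega>)\<bar>}"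
      by (intro finite_measure_mono) (auto intro!: borel_measurable_less Zm borel_measurable_abs)
    also have "\<dots> \<le> 1 / \<psi> (a / \<beta> (m n))"
      unfolding \<beta>_def
      by (rule orlicz_tail[OF P Zm \<beta>_finite \<psi>_convex \<psi>_incr \<psi>0 a]) (use m_range[OF n] in auto)
    finally show ?thesis using law2 by simp
  qed
  define B where "B n = (\<Union>i\<in>{1..n}. {\<omega>\<in>space M. H n - H' n < d (X (int i) \<omega>) (Y n (int i) \<omega>)} \<union>
                                        {\<omega>\<in>space M. H'' n - H n < d (X (int i) \<omega>) (Y n (int i) \<omega>)})" for n
  have B_sets: "B n \<in> sets M" for n
    unfolding B_def
    by (intro sets.finite_UN sets.Un borel_measurable_less borel_measurable_const dXY_meas X_meas Y_meas) auto
  have B_le: "measure M (B n) \<le> real n / \<psi> ((H'' n - H n) / \<beta> (m n)) + real n / \<psi> ((H n - H' n) / \<beta> (m n))" for n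
  proof (cases "n = 0")
    case True thus ?thesis by (simp add: B_def)
  next
    case False
    hence n: "n \<ge> 1" by simp
    let ?a = "1 / \<psi> ((H n - H' n) / \<beta> (m n))" and ?b = "1 / \<psi> ((H'' n - H n) / \<beta> (m n))"
    have "measure M (B n) \<le> (\<Sum>i\<in>{1..n}. measure M ({\<omega>\<in>space M. H n - H' n < d (X (int i) \<omega>) (Y n (int i) \<omega>)} \<union>
                                        {\<omega>\<in>space M. H'' n - H n < d (X (int i) \<omega>) (Y n (int i) \<omega>)}))"
      unfolding B_def
      by (intro measure_UNION_le sets.Un borel_measurable_less borel_measurable_const dXY_meas X_meas Y_meas) auto
    also have "\<dots> \<le> (\<Sum>i\<in>{1..n}. ?a + ?b)"
    proof (rule sum_mono)
      fix i assume "i \<in> {1..n}"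
      have "measure M ({\<omega>\<in>space M. H n - H' n < d (X (int i) \<omega>) (Y n (int i) \<omega>)} \<union>
                                        {\<omega>\<in>space M. H'' n - H n < d (X (int i) \<omega>) (Y n (int i) \<omega>)}) \<le>
            measure M {\<omega>\<in>space M. H n - H' n < d (X (int i) \<omega>) (Y n (int i) \<omega>)} +
            measure M {\<omega>\<in>space M. H'' n - H n < d (X (int i) \<omega>) (Y n (int i) \<omega>)}"
        by (intro measure_Un_le borel_measurable_less borel_measurable_const dXY_meas X_meas Y_meas)
      also have "\<dots> \<le> ?a + ?b"
        using tail[OF n, of "H n - H' n" "int i"] tail[OF n, of "H'' n - H n" "int i"] H_order[of n]
        by (intro add_mono) auto
      finally show "measure M ({\<omega>\<in>space M. H n - H' n < d (X (int i) \<omega>) (Y n (int i) \<omega>)} \<union>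
                                        {\<omega>\<in>space M. H'' n - H n < d (X (int i) \<omega>) (Y n (int i) \<omega>)}) \<le> ?a + ?b" .
    qed
    also have "\<dots> = real n * ?a + real n * ?b" by (simp add: algebra_simps)
    finally show ?thesis by simp
  qed
  have AE_B: "AE \<omega> in M. eventually (\<lambda>n. \<omega> \<in> space M - B n) sequentially"
  proof (rule borel_cantelli_AE1[OF B_sets])
    show "emeasure M (B n) < \<infinity>" for n by (simp add: less_top[symmetric])
    show "summable (\<lambda>n. measure M (B n))"
    proof (rule summable_comparison_test_ev[OF _ summable_add[OF sum1 sum2]])
      show "\<forall>\<^sub>F n in sequentially. norm (measure M (B n)) \<le>
              real n / \<psi> ((H'' n - H n) / \<beta> (m n)) + real n / \<psi> ((H n - H' n) / \<beta> (m n))"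
        using B_le by (intro always_eventually) simp
    qed
  qed
  define \<xi> :: "real \<Rightarrow> nat \<Rightarrow> nat \<Rightarrow> 'w \<Rightarrow> real" where
    "\<xi> = (\<lambda>h n i \<omega>. if d (Y n (int i) \<omega>) x \<le> h then 1 else 0)"
  define C where "C = (\<lambda>n r. {i\<in>{1..n}. i mod m n = r})"
  have C_fin: "finite (C n r)" for n r by (simp add: C_def)
  have \<xi>_bin: "i \<in> C n r \<Longrightarrow> \<xi> h n i \<omega> \<in> {0,1}" for h n i \<omega> r by (simp add: \<xi>_def)
  have \<xi>_exp: "i \<in> C n r \<Longrightarrow> expectation (\<xi> h n i) = \<phi> h" for h n i r
  proof -
    have "\<xi> h n i = indicator {\<omega>. d (Y n (int i) \<omega>) x \<le> h}"
      by (auto simp: \<xi>_def fun_eq_iff indicator_def)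
    hence "expectation (\<xi> h n i) = measure M ({\<omega>. d (Y n (int i) \<omega>) x \<le> h} \<inter> space M)" by simp
    also have "{\<omega>. d (Y n (int i) \<omega>) x \<le> h} \<inter> space M = {\<omega>\<in>space M. d (Y n (int i) \<omega>) x \<le> h}" by auto
    finally show ?thesis using law1 by simp
  qed
  have \<xi>_ind: "indep_vars (\<lambda>_. borel) (\<xi> h n) (C n r)" for h n r
  proof -
    define K where "K = (\<lambda>i::nat. range (\<lambda>j. uX (int i) (v2 (m n) j)))"
    have disj: "disjoint_family_on K (C n r)"
    proof (unfold disjoint_family_on_def, intro ballI impI)
      fix i i' assume i: "i \<in> C n r" and i': "i' \<in> C n r" and ne: "i \<noteq> i'"
      show "K i \<inter> K i' = {}"
      proof (rule ccontr)
        assume "K i \<inter> K i' \<noteq> {}"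
        then obtain j j' where eq: "uX (int i) (v2 (m n) j) = uX (int i') (v2 (m n) j')"
          unfolding K_def by auto
        have far: "int (m n) \<le> \<bar>int i - int i'\<bar>"
        proof (cases "i < i'")
          case True
          hence "m n \<le> i' - i" using mod_class_far[of i "m n" i'] i i' by (auto simp: C_def)
          thus ?thesis using True by linarith
        next
          case False hence lt: "i' < i" using ne by simp
          hence "m n \<le> i - i'" using mod_class_far[of i' "m n" i] i i' by (auto simp: C_def)
          thus ?thesis using lt by linarith
        qed
        show False
        proof (cases "j < m n")
          case True
          show False
          proof (cases "j' < m n")
            case True
            with eq \<open>j < m n\<close> have "int i - int j = int i' - int j'" by (simp add: uX_def v2_def)
            with far \<open>j < m n\<close> \<open>j' < m n\<close> show False by linarith
          next
            case False
            with eq \<open>j < m n\<close> show False by (simp add: uX_def v2_def)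
          qed
        next
          case False
          show False
          proof (cases "j' < m n")
            case True
            with eq \<open>\<not> j < m n\<close> show False by (simp add: uX_def v2_def)
          next
            case False
            with eq \<open>\<not> j < m n\<close> have "enc (int i) j = enc (int i') j'" by (simp add: uX_def v2_def)
            with ne show False by (simp add: enc_eq)
          qed
        qed
      qed
    qed
    have ind1: "indep_vars (\<lambda>i. PiM (K i) (\<lambda>_. N)) (\<lambda>i \<omega>. restrict (\<lambda>s. A s \<omega>) (K i)) (C n r)"
      by (rule indep_vars_restrict[OF A_ind _ disj]) simp
    define \<Phi> where "\<Phi> = (\<lambda>i (f :: int + int \<Rightarrow> 'b). if d (g (\<lambda>j. f (uX (int i) (v2 (m n) j)))) x \<le> h then 1 else (0::real))"
    have \<Phi>m: "\<Phi> i \<in> borel_measurable (PiM (K i) (\<lambda>_. N))" for i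
    proof -
      have "(\<lambda>f. g (\<lambda>j. f (uX (int i) (v2 (m n) j)))) \<in> measurable (PiM (K i) (\<lambda>_. N)) F"
        by (rule measurable_compose[OF reidx_meas g_meas]) (simp add: K_def)
      hence m1[measurable]: "(\<lambda>f. d (g (\<lambda>j. f (uX (int i) (v2 (m n) j)))) x) \<in> borel_measurable (PiM (K i) (\<lambda>_. N))"
        using dx_meas by (rule measurable_compose)
      show ?thesis unfolding \<Phi>_def by measurable
    qed
    have ind2: "indep_vars (\<lambda>_. borel) (\<lambda>i \<omega>. \<Phi> i (restrict (\<lambda>s. A s \<omega>) (K i))) (C n r)"
      by (rule indep_vars_compose2[OF ind1 \<Phi>m])
    have eqf: "(\<lambda>\<omega>. \<Phi> i (restrict (\<lambda>s. A s \<omega>) (K i))) = \<xi> h n i" for i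
      by (auto simp: fun_eq_iff \<Phi>_def \<xi>_def Y_def K_def)
    show ?thesis using ind2 eqf by simp
  qed
  have \<xi>_meas: "i \<in> C n r \<Longrightarrow> \<xi> h n i \<in> borel_measurable M" for h n r i
    using \<xi>_ind[of h n r] unfolding indep_vars_def by blast

  define Gl where "Gl n = (\<Union>r\<in>{..<m n}. {\<omega>\<in>space M. (\<Sum>i\<in>C n r. \<xi> (H' n) n i \<omega>) \<le>
      real (card (C n r)) * \<phi> (H' n) - real n * \<phi> (H' n) / (2 * real (m n))})" for n
  define Gu where "Gu n = (\<Union>r\<in>{..<m n}. {\<omega>\<in>space M.
      real (card (C n r)) * \<phi> (H'' n) + real n * \<phi> (H'' n) / real (m n) \<le> (\<Sum>i\<in>C n r. \<xi> (H'' n) n i \<omega>)})" for n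
  have sum_meas: "(\<lambda>\<omega>. \<Sum>i\<in>C n r. \<xi> h n i \<omega>) \<in> borel_measurable M" for h n r
    by (rule borel_measurable_sum) (rule \<xi>_meas)
  have Gl_sets: "Gl n \<in> sets M" for n
    unfolding Gl_def by (intro sets.finite_UN borel_measurable_le sum_meas borel_measurable_const) auto
  have Gu_sets: "Gu n \<in> sets M" for n
    unfolding Gu_def by (intro sets.finite_UN borel_measurable_le sum_meas borel_measurable_const) auto
  have card_C: "real (card (C n r)) \<le> 2 * real n / real (m n)" if n: "n \<ge> 1" for n r
    unfolding C_def by (rule mod_class_card) (use m_range[OF n] in auto)
  define q where "q n = real n * \<phi> (H' n) / real (m n)" for n
  have low_bd: "measure M {\<omega>\<in>space M. (\<Sum>i\<in>C n r. \<xi> (H' n) n i \<omega>) \<le>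
      real (card (C n r)) * \<phi> (H' n) - real n * \<phi> (H' n) / (2 * real (m n))} \<le> exp (- (q n / 16))"
    if n: "n \<ge> 1" for n r
  proof -
    have mpos: "real (m n) > 0" using m_range[OF n] by simp
    have "measure M {\<omega>\<in>space M. (\<Sum>i\<in>C n r. \<xi> (H' n) n i \<omega>) \<le>
      real (card (C n r)) * \<phi> (H' n) - real n * \<phi> (H' n) / (2 * real (m n))} \<le>
      exp (real (card (C n r)) * \<phi> (H' n) / 32 - (real n * \<phi> (H' n) / (2 * real (m n))) / 4)"
      by (rule chernoff_low[OF C_fin \<xi>_ind \<xi>_bin \<xi>_exp \<phi>_nonneg])
    also have "\<dots> \<le> exp (- (q n / 16))"
    proof -
      have "real (card (C n r)) * \<phi> (H' n) \<le> (2 * real n / real (m n)) * \<phi> (H' n)"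
        by (rule mult_right_mono[OF card_C[OF n] \<phi>_nonneg])
      also have "\<dots> = 2 * q n" by (simp add: q_def)
      finally have c: "real (card (C n r)) * \<phi> (H' n) \<le> 2 * q n" .
      have e: "real n * \<phi> (H' n) / (2 * real (m n)) = q n / 2" using mpos by (simp add: q_def field_simps)
      show ?thesis unfolding e using c by simp
    qed
    finally show ?thesis .
  qed
  have up_bd: "measure M {\<omega>\<in>space M.
      real (card (C n r)) * \<phi> (H'' n) + real n * \<phi> (H'' n) / real (m n) \<le> (\<Sum>i\<in>C n r. \<xi> (H'' n) n i \<omega>)}
      \<le> exp (- (q n / 16))"
    if n: "n \<ge> 1" for n r
  proof -
    have mpos: "real (m n) > 0" using m_range[OF n] by simp
    define q2 where "q2 = real n * \<phi> (H'' n) / real (m n)"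
    have "measure M {\<omega>\<in>space M.
      real (card (C n r)) * \<phi> (H'' n) + real n * \<phi> (H'' n) / real (m n) \<le> (\<Sum>i\<in>C n r. \<xi> (H'' n) n i \<omega>)}
      \<le> exp (real (card (C n r)) * \<phi> (H'' n) / 16 - (real n * \<phi> (H'' n) / real (m n)) / 4)"
      by (rule chernoff_up[OF C_fin \<xi>_ind \<xi>_bin \<xi>_exp \<phi>_nonneg])
    also have "\<dots> \<le> exp (- (q n / 16))"
    proof -
      have "real (card (C n r)) * \<phi> (H'' n) \<le> (2 * real n / real (m n)) * \<phi> (H'' n)"
        by (rule mult_right_mono[OF card_C[OF n] \<phi>_nonneg])
      also have "\<dots> = 2 * q2" by (simp add: q2_def)
      finally have c: "real (card (C n r)) * \<phi> (H'' n) \<le> 2 * q2" .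
      have "\<phi> (H' n) \<le> \<phi> (H'' n)" using H_order[of n] by (intro \<phi>_mono) linarith
      hence "real n * \<phi> (H' n) \<le> real n * \<phi> (H'' n)" by (rule mult_left_mono) simp
      hence qq: "q n \<le> q2" unfolding q_def q2_def using mpos by (intro divide_right_mono) auto
      have q0: "q n \<ge> 0" unfolding q_def using \<phi>_nonneg by simp
      show ?thesis unfolding q2_def[symmetric] using c qq q0 by simp
    qed
    finally show ?thesis .
  qed
  have Gl_le: "measure M (Gl n) \<le> real (m n) * exp (- (q n / 16))" if n: "n \<ge> 1" for n
  proof -
    have "measure M (Gl n) \<le> (\<Sum>r<m n. measure M {\<omega>\<in>space M. (\<Sum>i\<in>C n r. \<xi> (H' n) n i \<omega>) \<le>
      real (card (C n r)) * \<phi> (H' n) - real n * \<phi> (H' n) / (2 * real (m n))})"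
      unfolding Gl_def by (intro measure_UNION_le borel_measurable_le sum_meas borel_measurable_const) auto
    also have "\<dots> \<le> (\<Sum>r<m n. exp (- (q n / 16)))" by (intro sum_mono low_bd n)
    finally show ?thesis by simp
  qed
  have Gu_le: "measure M (Gu n) \<le> real (m n) * exp (- (q n / 16))" if n: "n \<ge> 1" for n
  proof -
    have "measure M (Gu n) \<le> (\<Sum>r<m n. measure M {\<omega>\<in>space M.
      real (card (C n r)) * \<phi> (H'' n) + real n * \<phi> (H'' n) / real (m n) \<le> (\<Sum>i\<in>C n r. \<xi> (H'' n) n i \<omega>)})"
      unfolding Gu_def by (intro measure_UNION_le borel_measurable_le sum_meas borel_measurable_const) auto
    also have "\<dots> \<le> (\<Sum>r<m n. exp (- (q n / 16)))" by (intro sum_mono up_bd n)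
    finally show ?thesis by simp
  qed
  have ev_small: "eventually (\<lambda>n. real (m n) * exp (- (q n / 16)) \<le> inverse (real n ^ 2)) sequentially"
  proof -
    have e1: "eventually (\<lambda>n. 48 \<le> real n * \<phi> (H' n) / (real (m n) * ln (real n))) sequentially"
      using lim unfolding filterlim_at_top by blast
    show ?thesis using e1 eventually_ge_at_top[of "3::nat"]
    proof eventually_elim
      case (elim n)
      hence n3: "n \<ge> 3" by simp
      hence n1: "n \<ge> 1" by simp
      have mpos: "real (m n) > 0" and mle: "real (m n) \<le> real n" using m_range[OF n1] by auto
      have lpos: "ln (real n) > 0" using n3 by (intro ln_gt_zero) simp
      have "real n * \<phi> (H' n) / (real (m n) * ln (real n)) = q n / ln (real n)"
        by (simp add: q_def field_simps)
      hence "48 \<le> q n / ln (real n)" using elim by simp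
      hence "48 * ln (real n) \<le> q n" using lpos by (simp add: le_divide_eq)
      hence "exp (- (q n / 16)) \<le> exp (- (3 * ln (real n)))" by simp
      also have "exp (3 * ln (real n)) = real n ^ 3"
        using exp_of_nat_mult[of 3 "ln (real n)"] n3 by simp
      hence "exp (- (3 * ln (real n))) = inverse (real n ^ 3)" by (simp add: exp_minus)
      finally have "exp (- (q n / 16)) \<le> inverse (real n ^ 3)" .
      hence "real (m n) * exp (- (q n / 16)) \<le> real n * inverse (real n ^ 3)"
        using mle mpos by (intro mult_mono) auto
      also have "\<dots> = inverse (real n ^ 2)" using n3 by (simp add: field_simps power3_eq_cube power2_eq_square)
      finally show ?case .
    qed
  qed
  have sum_inv: "summable (\<lambda>n. inverse (real n ^ 2))"
    by (rule inverse_power_summable) simp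
  have AE_Gl: "AE \<omega> in M. eventually (\<lambda>n. \<omega> \<in> space M - Gl n) sequentially"
  proof (rule borel_cantelli_AE1[OF Gl_sets])
    show "emeasure M (Gl n) < \<infinity>" for n by (simp add: less_top[symmetric])
    show "summable (\<lambda>n. measure M (Gl n))"
    proof (rule summable_comparison_test_ev[OF _ sum_inv])
      show "\<forall>\<^sub>F n in sequentially. norm (measure M (Gl n)) \<le> inverse (real n ^ 2)"
        using ev_small eventually_ge_at_top[of "1::nat"]
        by eventually_elim (use Gl_le in \<open>auto intro: order_trans\<close>)
    qed
  qed
  have AE_Gu: "AE \<omega> in M. eventually (\<lambda>n. \<omega> \<in> space M - Gu n) sequentially"
  proof (rule borel_cantelli_AE1[OF Gu_sets])
    show "emeasure M (Gu n) < \<infinity>" for n by (simp add: less_top[symmetric])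
    show "summable (\<lambda>n. measure M (Gu n))"
    proof (rule summable_comparison_test_ev[OF _ sum_inv])
      show "\<forall>\<^sub>F n in sequentially. norm (measure M (Gu n)) \<le> inverse (real n ^ 2)"
        using ev_small eventually_ge_at_top[of "1::nat"]
        by eventually_elim (use Gu_le in \<open>auto intro: order_trans\<close>)
    qed
  qed

  have main: "real n * \<phi> (H' n) / 2 \<le> real (k n \<omega>) \<and> real (k n \<omega>) \<le> 2 * real n * \<phi> (H'' n)"
    if n: "n \<ge> 1" and \<omega>: "\<omega> \<in> space M" and nB: "\<omega> \<notin> B n" and nGl: "\<omega> \<notin> Gl n" and nGu: "\<omega> \<notin> Gu n"
    for n \<omega>
  proof -
    have mpos: "real (m n) > 0" and m1: "1 \<le> m n" using m_range[OF n] by auto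
    define Ix where "Ix i = (if d (X (int i) \<omega>) x \<le> H n then 1 else 0 :: real)" for i
    have kk: "real (k n \<omega>) = (\<Sum>i\<in>{1..n}. Ix i)"
      unfolding k_def Ix_def by (rule card_filter_sum) simp
    have XF: "X (int i) \<omega> \<in> space F" for i using X_meas \<omega> by (rule measurable_space)
    have YF: "Y n (int i) \<omega> \<in> space F" for i using Y_meas \<omega> by (rule measurable_space)
    have dXY: "d (X (int i) \<omega>) (Y n (int i) \<omega>) \<le> H n - H' n \<and> d (X (int i) \<omega>) (Y n (int i) \<omega>) \<le> H'' n - H n"
      if "i \<in> {1..n}" for i
      using nB that \<omega> unfolding B_def by (fastforce simp: not_less)
    have cmp1: "\<xi> (H' n) n i \<omega> \<le> Ix i" if "i \<in> {1..n}" for i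
    proof (cases "d (Y n (int i) \<omega>) x \<le> H' n")
      case True
      have "d (X (int i) \<omega>) x \<le> d (X (int i) \<omega>) (Y n (int i) \<omega>) + d (Y n (int i) \<omega>) x"
        by (rule tri[OF XF YF x_in])
      hence "d (X (int i) \<omega>) x \<le> H n" using dXY[OF that] True by linarith
      thus ?thesis by (simp add: Ix_def \<xi>_def)
    qed (simp add: Ix_def \<xi>_def)
    have cmp2: "Ix i \<le> \<xi> (H'' n) n i \<omega>" if "i \<in> {1..n}" for i
    proof (cases "d (X (int i) \<omega>) x \<le> H n")
      case True
      have "d (Y n (int i) \<omega>) x \<le> d (Y n (int i) \<omega>) (X (int i) \<omega>) + d (X (int i) \<omega>) x"
        by (rule tri[OF YF XF x_in])
      also have "d (Y n (int i) \<omega>) (X (int i) \<omega>) = d (X (int i) \<omega>) (Y n (int i) \<omega>)" by (rule sym[OF YF XF])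
      finally have "d (Y n (int i) \<omega>) x \<le> H'' n" using dXY[OF that] True by linarith
      thus ?thesis by (simp add: Ix_def \<xi>_def)
    qed (simp add: Ix_def \<xi>_def)
    have ne: "{..<m n} \<noteq> {}" using m1 by (simp add: lessThan_empty_iff)
    have cardsum: "(\<Sum>r<m n. real (card (C n r))) = real n"
      using mod_class_sum[OF m1, where n=n and f="\<lambda>_. 1"] by (simp add: C_def)
    have "real n * \<phi> (H' n) / 2 = (\<Sum>r<m n. real (card (C n r)) * \<phi> (H' n) - real n * \<phi> (H' n) / (2 * real (m n)))"
      using mpos by (simp add: sum_subtractf sum_distrib_right[symmetric] cardsum)
    also have "\<dots> < (\<Sum>r<m n. \<Sum>i\<in>C n r. \<xi> (H' n) n i \<omega>)"
      using nGl \<omega> unfolding Gl_def by (intro sum_strict_mono[OF _ ne]) (auto simp: not_le)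
    also have "\<dots> = (\<Sum>i\<in>{1..n}. \<xi> (H' n) n i \<omega>)"
      unfolding C_def by (rule mod_class_sum[OF m1])
    also have "\<dots> \<le> (\<Sum>i\<in>{1..n}. Ix i)" by (rule sum_mono[OF cmp1])
    finally have lo: "real n * \<phi> (H' n) / 2 \<le> real (k n \<omega>)" using kk by simp
    have "(\<Sum>i\<in>{1..n}. Ix i) \<le> (\<Sum>i\<in>{1..n}. \<xi> (H'' n) n i \<omega>)" by (rule sum_mono[OF cmp2])
    also have "\<dots> = (\<Sum>r<m n. \<Sum>i\<in>C n r. \<xi> (H'' n) n i \<omega>)"
      unfolding C_def by (rule mod_class_sum[OF m1, symmetric])
    also have "\<dots> < (\<Sum>r<m n. real (card (C n r)) * \<phi> (H'' n) + real n * \<phi> (H'' n) / real (m n))"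
      using nGu \<omega> unfolding Gu_def by (intro sum_strict_mono[OF _ ne]) (auto simp: not_le)
    also have "\<dots> = 2 * real n * \<phi> (H'' n)"
      using mpos by (simp add: sum.distrib sum_distrib_right[symmetric] cardsum)
    finally have hi: "real (k n \<omega>) \<le> 2 * real n * \<phi> (H'' n)" using kk by simp
    show ?thesis using lo hi by simp
  qed
  show ?thesis
    using AE_B AE_Gl AE_Gu
  proof eventually_elim
    case (elim \<omega>)
    show ?case using elim(1) elim(2) elim(3) eventually_ge_at_top[of "1::nat"]
    proof eventually_elim
      case (elim n)
      thus ?case using main by auto
    qed
  qed
qed

end
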